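(* Let $\mathcal{G}=(\mathcal{V},\mathcal{E})$ be a DAG with treatment $A$ and outcome $Y$ and a linear Gaussian causal model on it as in the context. Let $K\subseteq\mathcal{V}\setminus\{A,Y\}$ be any set of variables (not necessarily a valid adjustment set) and let $P$ be a precision variable in $\mathcal{G}$. Then the bias of the OLS estimator is invariant to adding $P$: $B(\hat\tau_K)=B(\hat\tau_{K\cup P})$.
   Context: $\mathcal{G}=(\mathcal{V},\mathcal{E})$ is a DAG containing treatment $A$ and outcome $Y$ with an edge $A\to Y$; variables follow $V_i=\sum_{V_j\in\mathrm{Pa}(V_i,\mathcal{G})}\beta_{ij}V_j+\epsilon_i$ with jointly independent $\epsilon_i\sim\mathcal{N}(0,\sigma_i^2)$, Markov and faithful to $\mathcal{G}$; no variable of $\mathcal{V}\setminus\{A,Y\}$ is a descendant of $A$. $\tau=\frac{\partial}{\partial a}E\{Y\mid do(A=a)\}$. $\hat\tau_K$ is the OLS coefficient of $A$ when regressing $Y$ on $A$ and $K$, and $B(\hat\tau_K)=E(\hat\tau_K)-\tau$. $\mathcal{G}'$ is $\mathcal{G}$ with $A\to Y$ removed. A precision variable is $V\in\mathcal{V}\setminus\{A,Y\}$ that in $\mathcal{G}'$ is d-separated from $A$ given every $K\subseteq\mathcal{V}\setminus\{A,Y\}$ and d-connected to $Y$ given some $L\subseteq\mathcal{V}\setminus\{A,Y\}$. *)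

theory Defs
  imports "HOL-Analysis.Analysis"
begin

section \<open>Graph notions (DAG on a finite vertex type, edges as pairs (parent, child))\<close>

definition adj :: "('v \<times> 'v) set \<Rightarrow> 'v \<Rightarrow> 'v \<Rightarrow> bool" where
  "adj E u w \<longleftrightarrow> (u, w) \<in> E \<or> (w, u) \<in> E"

definition collider :: "('v \<times> 'v) set \<Rightarrow> 'v \<Rightarrow> 'v \<Rightarrow> 'v \<Rightarrow> bool" where
  "collider E a b c \<longleftrightarrow> (a, b) \<in> E \<and> (c, b) \<in> E"

definition d_connecting_path :: "('v \<times> 'v) set \<Rightarrow> 'v list \<Rightarrow> 'v \<Rightarrow> 'v \<Rightarrow> 'v set \<Rightarrow> bool" where
  "d_connecting_path E p x y Z \<longleftrightarrow>
     p \<noteq> [] \<and> hd p = x \<and> last p = y \<and> distinct p \<and>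
     (\<forall>i. Suc i < length p \<longrightarrow> adj E (p ! i) (p ! Suc i)) \<and>
     (\<forall>i. 0 < i \<and> Suc i < length p \<longrightarrow>
        (if collider E (p ! (i - 1)) (p ! i) (p ! Suc i)
         then (\<exists>d. (p ! i, d) \<in> E\<^sup>* \<and> d \<in> Z)
         else p ! i \<notin> Z))"

definition d_connected :: "('v \<times> 'v) set \<Rightarrow> 'v \<Rightarrow> 'v \<Rightarrow> 'v set \<Rightarrow> bool" where
  "d_connected E x y Z \<longleftrightarrow> (\<exists>p. d_connecting_path E p x y Z)"

definition d_separated :: "('v \<times> 'v) set \<Rightarrow> 'v \<Rightarrow> 'v \<Rightarrow> 'v set \<Rightarrow> bool" where
  "d_separated E x y Z \<longleftrightarrow> \<not> d_connected E x y Z"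

text \<open>beta i j is the coefficient of V_j in the structural equation of V_i;
  sd i is the standard deviation of the noise epsilon_i.
  X = B X + eps, hence Cov(X) = (I - B)^{-1} D (I - B)^{-T}.\<close>
definition coef_matrix :: "('v::finite \<Rightarrow> 'v \<Rightarrow> real) \<Rightarrow> real^'v^'v" where
  "coef_matrix beta = (\<chi> i j. beta i j)"

definition sem_cov :: "('v::finite \<Rightarrow> 'v \<Rightarrow> real) \<Rightarrow> ('v \<Rightarrow> real) \<Rightarrow> real^'v^'v" where
  "sem_cov beta sd =
     (let M = matrix_inv (mat 1 - coef_matrix beta);
          D = (\<chi> i j. if i = j then (sd i)\<^sup>2 else 0)
      in M ** D ** transpose M)"

text \<open>Population least-squares coefficients of the regression of y on the variables in W
  (the unique solution supported on W of the normal equations).\<close>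
definition lin_proj :: "real^'v^'v \<Rightarrow> 'v::finite \<Rightarrow> 'v set \<Rightarrow> ('v \<Rightarrow> real)" where
  "lin_proj S y W = (THE b. (\<forall>u. u \<notin> W \<longrightarrow> b u = 0) \<and>
       (\<forall>w\<in>W. S $ w $ y = (\<Sum>u\<in>W. b u * S $ w $ u)))"

definition ols_coef :: "real^'v^'v \<Rightarrow> 'v::finite \<Rightarrow> 'v \<Rightarrow> 'v set \<Rightarrow> real" where
  "ols_coef S A Y K = lin_proj S Y (insert A K) A"

text \<open>Partial covariance of i and j given S (Gaussian: zero iff conditional independence).\<close>
definition pcov :: "real^'v^'v \<Rightarrow> 'v::finite \<Rightarrow> 'v \<Rightarrow> 'v set \<Rightarrow> real" where
  "pcov S i j Z = S $ i $ j - (\<Sum>u\<in>Z. lin_proj S i Z u * S $ u $ j)"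

text \<open>E[Y | do(A = a)]: replace the structural equation of A by A := a (noise means are 0).\<close>
definition do_mean :: "('v::finite \<Rightarrow> 'v \<Rightarrow> real) \<Rightarrow> 'v \<Rightarrow> 'v \<Rightarrow> real \<Rightarrow> real" where
  "do_mean beta A Y a =
     (matrix_inv (mat 1 - (\<chi> i j. if i = A then 0 else beta i j))
        *v (\<chi> i. if i = A then a else 0)) $ Y"

definition causal_effect :: "('v::finite \<Rightarrow> 'v \<Rightarrow> real) \<Rightarrow> 'v \<Rightarrow> 'v \<Rightarrow> real" where
  "causal_effect beta A Y =
     (THE t. \<forall>a. (do_mean beta A Y has_real_derivative t) (at a))"

definition ols_bias :: "('v::finite \<Rightarrow> 'v \<Rightarrow> real) \<Rightarrow> ('v \<Rightarrow> real) \<Rightarrow> 'v \<Rightarrow> 'v \<Rightarrow> 'v set \<Rightarrow> real" where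
  "ols_bias beta sd A Y K = ols_coef (sem_cov beta sd) A Y K - causal_effect beta A Y"

definition precision_var :: "('v \<times> 'v) set \<Rightarrow> 'v \<Rightarrow> 'v \<Rightarrow> 'v \<Rightarrow> bool" where
  "precision_var E A Y P \<longleftrightarrow>
     (let E' = E - {(A, Y)} in
       P \<noteq> A \<and> P \<noteq> Y \<and>
       (\<forall>K. K \<subseteq> UNIV - {A, Y, P} \<longrightarrow> d_separated E' P A K) \<and>
       (\<exists>L. L \<subseteq> UNIV - {A, Y, P} \<and> d_connected E' P Y L))"

end

theory Submission
  imports Defs
begin

lemma gram_entry:
  fixes N :: "real^'n^'n"
  shows "(N ** transpose N) $ u $ v = (N $ u) \<bullet> (N $ v)"
  by (simp add: matrix_matrix_mult_def transpose_def inner_vec_def)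

lemma rows_indep:
  fixes N :: "real^'n^'n"
  assumes "invertible N" and "(\<Sum>u\<in>UNIV. c u *\<^sub>R (N $ u)) = 0"
  shows "c u = 0"
proof -
  obtain N' where NN: "N ** N' = mat 1" using assms(1) unfolding invertible_def by blast
  have "(\<chi> u. c u) v* N = (\<Sum>u\<in>UNIV. c u *\<^sub>R (N $ u))"
    by (simp add: vector_matrix_mult_def vec_eq_iff mult.commute)
  then have z: "(\<chi> u. c u) v* N = 0" using assms(2) by simp
  have "(\<chi> u. c u) = (\<chi> u. c u) v* (N ** N')" using NN by simp
  also have "\<dots> = ((\<chi> u. c u) v* N) v* N'" by (simp add: vector_matrix_mul_assoc)
  also have "\<dots> = 0" using z by simp
  finally show ?thesis by (metis vec_lambda_beta zero_index)
qed

lemma inv_of_injective: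
  fixes A :: "real^'n^'n"
  assumes "\<And>x. A *v x = 0 \<Longrightarrow> x = 0"
  shows "invertible A"
  using assms invertible_left_inverse matrix_left_invertible_ker by blast

lemma matrix_inv_props:
  fixes A :: "real^'n^'n"
  assumes "invertible A"
  shows "A ** matrix_inv A = mat 1" "matrix_inv A ** A = mat 1" "invertible (matrix_inv A)"
proof -
  have "A ** matrix_inv A = mat 1 \<and> matrix_inv A ** A = mat 1"
    unfolding matrix_inv_def by (rule someI_ex) (use assms invertible_def in blast)
  then show "A ** matrix_inv A = mat 1" "matrix_inv A ** A = mat 1" "invertible (matrix_inv A)"
    unfolding invertible_def by blast+
qed

lemma IminusB_inv:
  fixes E :: "('v::finite \<times> 'v) set" and beta :: "'v \<Rightarrow> 'v \<Rightarrow> real"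
  assumes dag: "acyclic E" and parents: "\<And>i j. (j, i) \<notin> E \<Longrightarrow> beta i j = 0"
  shows "invertible (mat 1 - coef_matrix beta)"
proof (rule inv_of_injective)
  fix x :: "real^'v"
  assume "(mat 1 - coef_matrix beta) *v x = 0"
  then have "x - coef_matrix beta *v x = 0"
    by (simp add: matrix_vector_mult_diff_rdistrib)
  then have "(x - coef_matrix beta *v x) $ i = 0" for i by simp
  moreover have "(coef_matrix beta *v x) $ i = (\<Sum>j\<in>UNIV. beta i j * x $ j)" for i
    by (simp add: matrix_vector_mult_def coef_matrix_def)
  ultimately have eq: "x $ i = (\<Sum>j\<in>UNIV. beta i j * x $ j)" for i
    by (metis eq_iff_diff_eq_0 vector_minus_component)
  have wf: "wf E" using dag by (simp add: finite_acyclic_wf)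
  have "x $ i = 0" for i
  proof (induction i rule: wf_induct[OF wf])
    case (1 i)
    have "beta i j * x $ j = 0" for j
    proof (cases "(j, i) \<in> E")
      case True then show ?thesis using 1 by simp
    next
      case False then show ?thesis using parents by simp
    qed
    then have "(\<Sum>j\<in>UNIV. beta i j * x $ j) = 0" by (intro sum.neutral) blast
    then show ?case using eq[of i] by linarith
  qed
  then show "x = 0" by (simp add: vec_eq_iff)
qed

lemma sem_cov_gram:
  fixes E :: "('v::finite \<times> 'v) set" and beta :: "'v \<Rightarrow> 'v \<Rightarrow> real"
  assumes dag: "acyclic E" and parents: "\<And>i j. (j, i) \<notin> E \<Longrightarrow> beta i j = 0"
    and sdp: "\<And>i. sd i > 0"
  shows "\<exists>N::real^'v^'v. invertible N \<and> sem_cov beta sd = N ** transpose N"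
proof -
  define M where "M = matrix_inv (mat 1 - coef_matrix beta)"
  define Dg :: "real^'v^'v" where "Dg = (\<chi> i j. if i = j then sd i else 0)"
  define Di :: "real^'v^'v" where "Di = (\<chi> i j. if i = j then 1 / sd i else 0)"
  have iM: "invertible M" unfolding M_def
    using matrix_inv_props(3)[OF IminusB_inv[OF dag parents]] .
  have d1: "Dg ** Di = mat 1" "Di ** Dg = mat 1"
    using sdp by (auto simp: Dg_def Di_def matrix_matrix_mult_def mat_def vec_eq_iff
        if_distrib[of "\<lambda>a. a * _"] sum.delta' intro!: sum.neutral less_imp_neq[symmetric]
        cong: if_cong)
  then have iD: "invertible Dg" unfolding invertible_def by blast
  have tD: "transpose Dg = Dg" by (simp add: Dg_def transpose_def vec_eq_iff)
  have DD: "Dg ** Dg = (\<chi> i j. if i = j then (sd i)\<^sup>2 else 0)"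
    by (simp add: Dg_def matrix_matrix_mult_def vec_eq_iff power2_eq_square
        if_distrib[of "\<lambda>a. a * _"] sum.delta' cong: if_cong)
  have "sem_cov beta sd = (M ** Dg) ** transpose (M ** Dg)"
    unfolding sem_cov_def Let_def M_def[symmetric] DD[symmetric]
    by (simp add: matrix_transpose_mul tD matrix_mul_assoc)
  moreover have "invertible (M ** Dg)" using invertible_mult[OF iM iD] .
  ultimately show ?thesis by blast
qed

definition isLP :: "real^'v^'v \<Rightarrow> 'v::finite \<Rightarrow> 'v set \<Rightarrow> ('v \<Rightarrow> real) \<Rightarrow> bool" where
  "isLP S y W b \<longleftrightarrow> (\<forall>u. u \<notin> W \<longrightarrow> b u = 0) \<and>
       (\<forall>w\<in>W. S $ w $ y = (\<Sum>u\<in>W. b u * S $ w $ u))"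

lemma row_inj:
  fixes N :: "real^'n^'n"
  assumes "invertible N"
  shows "inj (\<lambda>u. N $ u)"
proof -
  have r: "N $ u = axis u 1 v* N" for u
  proof -
    have h: "(if c then 1 else 0) * (t::real) = (if c then t else 0)" for c t by simp
    show ?thesis by (simp add: vector_matrix_mult_def vec_eq_iff axis_def h)
  qed
  have "inj ((*v) (transpose N))"
    by (rule inj_matrix_vector_mult[OF transpose_invertible[OF assms]])
  moreover have e: "(\<lambda>x. x v* N) = (*v) (transpose N)" by (simp add: fun_eq_iff)
  ultimately have "inj (\<lambda>x. x v* N)" by simp
  moreover have "inj (\<lambda>u::'n. axis u (1::real))" by (simp add: inj_on_def axis_eq_axis)
  ultimately show ?thesis unfolding r by (simp add: inj_on_def)
qed

lemma isLP_exists: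
  fixes N :: "real^'v::finite^'v"
  assumes "invertible N"
  shows "\<exists>b. isLP (N ** transpose N) y W b"
proof -
  define r where "r u = N $ u" for u
  have inj: "inj r" using row_inj[OF assms] unfolding r_def .
  obtain p z where p: "p \<in> span (r ` W)" and orth: "\<And>w. w \<in> span (r ` W) \<Longrightarrow> orthogonal z w"
    and yz: "r y = p + z"
    using orthogonal_subspace_decomp_exists[of "r ` W" "r y"] by blast
  obtain a where "p = (\<Sum>v\<in>r ` W. a v *\<^sub>R v)"
    using p span_finite[of "r ` W"] by auto
  also have "\<dots> = (\<Sum>u\<in>W. a (r u) *\<^sub>R r u)"
    by (subst sum.reindex) (use inj in \<open>auto simp: inj_on_def\<close>)
  finally have pe: "p = (\<Sum>u\<in>W. a (r u) *\<^sub>R r u)" .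
  define b where "b u = (if u \<in> W then a (r u) else 0)" for u
  have "(N ** transpose N) $ w $ y = (\<Sum>u\<in>W. b u * (N ** transpose N) $ w $ u)" if w: "w \<in> W" for w
  proof -
    have "r w \<in> span (r ` W)" using w by (simp add: span_base)
    then have "z \<bullet> r w = 0" using orth orthogonal_def by blast
    then have "r w \<bullet> r y = r w \<bullet> p" unfolding yz by (simp add: inner_add_right inner_commute)
    also have "\<dots> = (\<Sum>u\<in>W. a (r u) * (r w \<bullet> r u))"
      unfolding pe by (simp add: inner_sum_right)
    also have "\<dots> = (\<Sum>u\<in>W. b u * (r w \<bullet> r u))"
      by (rule sum.cong) (auto simp: b_def)
    finally show ?thesis by (simp add: gram_entry r_def)
  qed
  moreover have "\<forall>u. u \<notin> W \<longrightarrow> b u = 0" by (simp add: b_def)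
  ultimately show ?thesis unfolding isLP_def by blast
qed

lemma isLP_unique:
  fixes N :: "real^'v::finite^'v"
  assumes "invertible N" and "isLP (N ** transpose N) y W b1" and "isLP (N ** transpose N) y W b2"
  shows "b1 = b2"
proof -
  define r where "r u = N $ u" for u
  define d where "d u = b1 u - b2 u" for u
  have d0: "d u = 0" if "u \<notin> W" for u using assms(2,3) that by (simp add: isLP_def d_def)
  have dW: "(\<Sum>u\<in>W. d u * (r w \<bullet> r u)) = 0" if "w \<in> W" for w
  proof -
    have "(\<Sum>u\<in>W. b1 u * (r w \<bullet> r u)) = (\<Sum>u\<in>W. b2 u * (r w \<bullet> r u))"
      using assms(2,3) that by (simp add: isLP_def gram_entry r_def)
    then show ?thesis by (simp add: d_def left_diff_distrib sum_subtractf)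
  qed
  define zz where "zz = (\<Sum>u\<in>W. d u *\<^sub>R r u)"
  have "zz \<bullet> zz = (\<Sum>w\<in>W. d w * (r w \<bullet> zz))"
    unfolding zz_def[of] by (simp add: inner_sum_left)
  also have "\<dots> = (\<Sum>w\<in>W. d w * (\<Sum>u\<in>W. d u * (r w \<bullet> r u)))"
    unfolding zz_def by (simp add: inner_sum_right)
  also have "\<dots> = 0" using dW by simp
  finally have "zz = 0" by simp
  moreover have "(\<Sum>u\<in>UNIV. d u *\<^sub>R r u) = zz"
    unfolding zz_def by (rule sum.mono_neutral_right) (auto simp: d0)
  ultimately have "d u = 0" for u using rows_indep[OF assms(1), of d u] by (simp add: r_def)
  then show ?thesis by (simp add: d_def fun_eq_iff)
qed

lemma lin_proj_isLP:
  fixes N :: "real^'v::finite^'v"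
  assumes "invertible N"
  shows "isLP (N ** transpose N) y W (lin_proj (N ** transpose N) y W)"
proof -
  have ex1: "\<exists>!b. isLP (N ** transpose N) y W b"
    by (rule ex_ex1I) (use isLP_exists[OF assms] isLP_unique[OF assms] in blast)+
  have "lin_proj (N ** transpose N) y W = (THE b. isLP (N ** transpose N) y W b)"
    by (simp add: lin_proj_def isLP_def)
  then show ?thesis using theI'[OF ex1] by simp
qed

lemma lin_proj_eq:
  fixes N :: "real^'v::finite^'v"
  assumes "invertible N" and "isLP (N ** transpose N) y W b"
  shows "lin_proj (N ** transpose N) y W = b"
  using isLP_unique[OF assms(1) lin_proj_isLP[OF assms(1)] assms(2)] .

lemma dsep_full:
  fixes E :: "('v \<times> 'v) set"
  assumes dag: "acyclic E" and edge_AY: "(A, Y) \<in> E"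
    and no_desc: "\<And>v. (A, v) \<in> E\<^sup>+ \<Longrightarrow> v = Y"
    and YK: "Y \<notin> K" and PY: "P \<noteq> Y"
    and sep': "d_separated (E - {(A, Y)}) P A K"
  shows "d_separated E P A K"
proof -
  let ?E' = "E - {(A, Y)}"
  have nochild: "(Y, c) \<notin> E" for c
  proof
    assume "(Y, c) \<in> E"
    then have "(A, c) \<in> E\<^sup>+" using edge_AY by auto
    then have "c = Y" by (rule no_desc)
    with \<open>(Y, c) \<in> E\<close> have "(Y, Y) \<in> E\<^sup>+" by auto
    then show False using dag unfolding acyclic_def by blast
  qed
  have AY: "A \<noteq> Y" using edge_AY dag unfolding acyclic_def by auto
  have Ydesc: "d = Y" if "(Y, d) \<in> E\<^sup>*" for d
    using that by (cases rule: converse_rtranclE) (auto simp: nochild)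
  have desc': "(x, d) \<in> ?E'\<^sup>*" if "(x, d) \<in> E\<^sup>*" "d \<noteq> Y" for x d
    using that
  proof (induction rule: converse_rtrancl_induct)
    case base then show ?case by simp
  next
    case (step x z)
    show ?case
    proof (cases "(x, z) = (A, Y)")
      case True
      then have "d = Y" using step(2) Ydesc by simp
      then show ?thesis using step by simp
    next
      case False
      then have "(x, z) \<in> ?E'" using step by simp
      then show ?thesis using step by (meson converse_rtrancl_into_rtrancl)
    qed
  qed
  show ?thesis unfolding d_separated_def d_connected_def
  proof
    assume "\<exists>p. d_connecting_path E p P A K"
    then obtain p where dp: "d_connecting_path E p P A K" by blast
    have ne: "p \<noteq> []" and hd: "hd p = P" and la: "last p = A" and di: "distinct p"
      and ad: "\<And>i. Suc i < length p \<Longrightarrow> adj E (p ! i) (p ! Suc i)"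
      and co: "\<And>i. 0 < i \<Longrightarrow> Suc i < length p \<Longrightarrow>
        (if collider E (p ! (i - 1)) (p ! i) (p ! Suc i)
         then (\<exists>d. (p ! i, d) \<in> E\<^sup>* \<and> d \<in> K) else p ! i \<notin> K)"
      using dp unfolding d_connecting_path_def by blast+
    have noY: "p ! i \<noteq> Y" if i: "i < length p" for i
    proof
      assume pi: "p ! i = Y"
      have "i \<noteq> 0" using pi hd ne PY by (metis hd_conv_nth)
      moreover have "i \<noteq> length p - 1" using pi la ne AY by (metis last_conv_nth)
      ultimately have i0: "0 < i" and i1: "Suc i < length p" using i by auto
      have "adj E (p ! (i - 1)) (p ! i)" using ad[of "i - 1"] i0 i1 by simp
      then have c1: "(p ! (i - 1), Y) \<in> E" using pi nochild by (auto simp: adj_def)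
      have "adj E (p ! i) (p ! Suc i)" using ad[of i] i1 by simp
      then have c2: "(p ! Suc i, Y) \<in> E" using pi nochild by (auto simp: adj_def)
      have "collider E (p ! (i - 1)) (p ! i) (p ! Suc i)" using c1 c2 pi by (simp add: collider_def)
      then obtain d where "(Y, d) \<in> E\<^sup>*" "d \<in> K" using co[OF i0 i1] pi by auto
      then show False using Ydesc YK by blast
    qed
    have "d_connecting_path ?E' p P A K"
      unfolding d_connecting_path_def
    proof (intro conjI allI impI)
      show "p \<noteq> []" "hd p = P" "last p = A" "distinct p" using ne hd la di by auto
    next
      fix i assume i: "Suc i < length p"
      then show "adj ?E' (p ! i) (p ! Suc i)"
        using ad[OF i] noY[of i] noY[of "Suc i"] by (auto simp: adj_def)
    next
      fix i assume i: "0 < i \<and> Suc i < length p"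
      have ceq: "collider ?E' (p ! (i - 1)) (p ! i) (p ! Suc i) = collider E (p ! (i - 1)) (p ! i) (p ! Suc i)"
        using noY[of i] i by (auto simp: collider_def)
      show "if collider ?E' (p ! (i - 1)) (p ! i) (p ! Suc i)
         then (\<exists>d. (p ! i, d) \<in> ?E'\<^sup>* \<and> d \<in> K) else p ! i \<notin> K"
        using co[of i] i desc' YK unfolding ceq by (auto split: if_splits) 
    qed
    then show False using sep' unfolding d_separated_def d_connected_def by blast
  qed
qed

theorem lemmaB7:
  fixes E :: "('v::finite \<times> 'v) set"
    and beta :: "'v \<Rightarrow> 'v \<Rightarrow> real"
    and sd :: "'v \<Rightarrow> real"
    and A Y P :: 'v
    and K :: "'v set"
  assumes dag: "acyclic E"
    and edge_AY: "(A, Y) \<in> E"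
    and parents: "\<And>i j. (j, i) \<notin> E \<Longrightarrow> beta i j = 0"
    and noise_pos: "\<And>i. sd i > 0"
    and faithful: "\<And>i j Z. i \<noteq> j \<Longrightarrow> i \<notin> Z \<Longrightarrow> j \<notin> Z \<Longrightarrow>
                     (pcov (sem_cov beta sd) i j Z = 0 \<longleftrightarrow> d_separated E i j Z)"
    and no_desc: "\<And>v. (A, v) \<in> E\<^sup>+ \<Longrightarrow> v = Y"
    and K_sub: "K \<subseteq> UNIV - {A, Y}"
    and prec: "precision_var E A Y P"
  shows "ols_bias beta sd A Y K = ols_bias beta sd A Y (insert P K)"
proof (cases "P \<in> K")
  case True
  then show ?thesis by (simp add: insert_absorb)
next
  case PK: False
  obtain N :: "real^'v^'v" where iN: "invertible N" and Seq: "sem_cov beta sd = N ** transpose N"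
    using sem_cov_gram[of E beta sd] dag parents noise_pos by blast
  define S where "S = N ** transpose N"
  have sym: "S $ u $ v = S $ v $ u" for u v by (simp add: S_def gram_entry inner_commute)
  have PA: "P \<noteq> A" and PY: "P \<noteq> Y"
    and sep': "\<And>L. L \<subseteq> UNIV - {A, Y, P} \<Longrightarrow> d_separated (E - {(A, Y)}) P A L"
    using prec unfolding precision_var_def Let_def by auto
  have AK: "A \<notin> K" and YK: "Y \<notin> K" using K_sub by auto
  have "d_separated (E - {(A, Y)}) P A K" using sep' K_sub PK by blast
  then have ds: "d_separated E P A K"
    using dsep_full[of E A Y K P] dag edge_AY no_desc YK PY by blast
  have pc: "pcov S P A K = 0" using faithful[OF PA PK AK] ds Seq S_def by simp
  define h where "h = lin_proj S P K"
  have hLP: "isLP S P K h" unfolding h_def S_def by (rule lin_proj_isLP[OF iN])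
  define W where "W = insert A K"
  have hA: "h A = 0" using hLP AK by (simp add: isLP_def)
  have sumW: "(\<Sum>u\<in>W. f u) = f A + (\<Sum>u\<in>K. f u)" for f :: "'v \<Rightarrow> real"
    unfolding W_def using AK by simp
  have hW: "isLP S P W h"
    unfolding isLP_def
  proof (intro conjI allI impI ballI)
    fix u assume "u \<notin> W" then show "h u = 0" using hLP by (simp add: isLP_def W_def)
  next
    fix w assume w: "w \<in> W"
    have "(\<Sum>u\<in>W. h u * S $ w $ u) = (\<Sum>u\<in>K. h u * S $ w $ u)" using sumW hA by simp
    moreover have "S $ w $ P = (\<Sum>u\<in>K. h u * S $ w $ u)"
    proof (cases "w = A")
      case True
      have "S $ P $ A = (\<Sum>u\<in>K. h u * S $ u $ A)" using pc unfolding pcov_def h_def by simp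
      then show ?thesis using True sym by simp
    next
      case False
      then have "w \<in> K" using w W_def by simp
      then show ?thesis using hLP by (simp add: isLP_def)
    qed
    ultimately show "S $ w $ P = (\<Sum>u\<in>W. h u * S $ w $ u)" by simp
  qed
  define b where "b = lin_proj S Y (insert P W)"
  have bLP: "isLP S Y (insert P W) b" unfolding b_def S_def by (rule lin_proj_isLP[OF iN])
  have PW: "P \<notin> W" using PA PK W_def by simp
  define b' where "b' u = (if u \<in> W then b u + b P * h u else 0)" for u
  have b'LP: "isLP S Y W b'"
    unfolding isLP_def
  proof (intro conjI allI impI ballI)
    fix u assume "u \<notin> W" then show "b' u = 0" by (simp add: b'_def)
  next
    fix w assume w: "w \<in> W"
    have "(\<Sum>u\<in>W. b' u * S $ w $ u) = (\<Sum>u\<in>W. b u * S $ w $ u + b P * (h u * S $ w $ u))"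
      by (rule sum.cong) (auto simp: b'_def algebra_simps)
    also have "\<dots> = (\<Sum>u\<in>W. b u * S $ w $ u) + b P * (\<Sum>u\<in>W. h u * S $ w $ u)"
      by (simp add: sum.distrib sum_distrib_left)
    also have "\<dots> = (\<Sum>u\<in>W. b u * S $ w $ u) + b P * S $ w $ P"
      using hW w by (simp add: isLP_def)
    also have "\<dots> = (\<Sum>u\<in>insert P W. b u * S $ w $ u)"
      using PW by simp
    also have "\<dots> = S $ w $ Y" using bLP w by (simp add: isLP_def)
    finally show "S $ w $ Y = (\<Sum>u\<in>W. b' u * S $ w $ u)" by simp
  qed
  have "lin_proj S Y W = b'" unfolding S_def by (rule lin_proj_eq[OF iN b'LP[unfolded S_def]])
  then have e1: "lin_proj S Y W A = b A" using hA by (simp add: b'_def W_def)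
  have e2: "insert A (insert P K) = insert P W" by (auto simp: W_def)
  show ?thesis
    unfolding ols_bias_def ols_coef_def Seq S_def[symmetric] e2
    using e1 b_def W_def by simp
qed

end
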